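(* Let assumption ( ** ) hold, and suppose that $w(t,x)$ is a polynomially bounded LT-solution of the Cauchy problem $(\mathbb D_{(k)} w)(t,x)=\Delta w(t,x)$, $t>0$, $x\in\mathbb R^n$; $w(0,x)=w_0(x)$, with $w_0(x)\equiv 0$. Then $w(t,x)\equiv 0$.
   Context: Let $k$ be a function on $(0,\infty)$ and define the operator $(\mathbb D_{(k)}u)(t)=\frac{d}{dt}\int_0^t k(t-\tau)u(\tau)\,d\tau - k(t)u(0)$, with Laplace transform $\mathcal K(p)=\int_0^\infty e^{-pt}k(t)\,dt$. Assumption ( ** ): the function $k$ is nonnegative, locally integrable, nonzero on a set of positive measure, and its Laplace transform $\mathcal K(p)$ exists for all $p>0$. A function $w(t,x)$ is a polynomially bounded LT-solution of the Cauchy problem if $|w(t,x)|\le P(|x|)$ for some polynomial $P$ independent of $t$, $w$ is continuous in $t$ on $[0,\infty)$ uniformly with respect to $x\in\mathbb R^n$, $w(0,x)=w_0(x)$, and its Laplace transform in $t$, $\tilde w(p,x)$, is twice continuously differentiable in $x$ for each $p>0$ and satisfies $p\mathcal K(p)\tilde w(p,x)-\mathcal K(p)w_0(x)=\Delta \tilde w(p,x)$, $p>0$, $x\in\mathbb R^n$. *)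

theory Defs
  imports "HOL-Analysis.Analysis" "HOL-Computational_Algebra.Polynomial"
begin

definition laplace :: "(real \<Rightarrow> real) \<Rightarrow> real \<Rightarrow> real" where
  "laplace f p = (LINT t:{0<..}|lborel. exp (- p * t) * f t)"

definition assumption_kernel :: "(real \<Rightarrow> real) \<Rightarrow> bool" where
  "assumption_kernel k \<longleftrightarrow>
     (\<forall>t>0. k t \<ge> 0) \<and>
     (\<forall>a b. 0 < a \<longrightarrow> set_integrable lborel {a..b} k) \<and>
     emeasure lborel {t\<in>{0<..}. k t \<noteq> 0} > 0 \<and>
     (\<forall>p>0. set_integrable lborel {0<..} (\<lambda>t. exp (- p * t) * k t))"

definition has_partial :: "'n \<Rightarrow> (real^'n \<Rightarrow> real) \<Rightarrow> real^'n \<Rightarrow> bool" where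
  "has_partial i f x \<longleftrightarrow> (\<lambda>s. f (x + s *\<^sub>R axis i 1)) differentiable (at 0)"

definition partial :: "'n \<Rightarrow> (real^'n \<Rightarrow> real) \<Rightarrow> real^'n \<Rightarrow> real" where
  "partial i f x = deriv (\<lambda>s. f (x + s *\<^sub>R axis i 1)) 0"

definition C2 :: "(real^'n \<Rightarrow> real) \<Rightarrow> bool" where
  "C2 f \<longleftrightarrow> continuous_on UNIV f \<and>
     (\<forall>i. (\<forall>x. has_partial i f x) \<and> continuous_on UNIV (partial i f)) \<and>
     (\<forall>i j. (\<forall>x. has_partial j (partial i f) x) \<and> continuous_on UNIV (partial j (partial i f)))"

definition laplacian :: "(real^'n \<Rightarrow> real) \<Rightarrow> real^'n \<Rightarrow> real" where
  "laplacian f x = (\<Sum>i\<in>UNIV. partial i (partial i f) x)"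

definition poly_bounded_LT_solution ::
  "(real \<Rightarrow> real) \<Rightarrow> (real^'n \<Rightarrow> real) \<Rightarrow> (real \<Rightarrow> real^'n \<Rightarrow> real) \<Rightarrow> bool" where
  "poly_bounded_LT_solution k w0 w \<longleftrightarrow>
     (\<exists>P :: real poly. \<forall>t\<ge>0. \<forall>x. \<bar>w t x\<bar> \<le> poly P (norm x)) \<and>
     (\<forall>t0\<ge>0. \<forall>e>0. \<exists>d>0. \<forall>t\<ge>0. \<bar>t - t0\<bar> < d \<longrightarrow> (\<forall>x. \<bar>w t x - w t0 x\<bar> < e)) \<and>
     (\<forall>x. w 0 x = w0 x) \<and>
     (\<forall>p>0. C2 (\<lambda>x. laplace (\<lambda>t. w t x) p) \<and>
        (\<forall>x. p * laplace k p * laplace (\<lambda>t. w t x) p - laplace k p * w0 x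
             = laplacian (\<lambda>y. laplace (\<lambda>t. w t y) p) x))"

end

theory Submission imports Defs "HOL-Real_Asymp.Real_Asymp" begin

lemma max_second_deriv:
  fixes G G' :: "real \<Rightarrow> real"
  assumes d1: "\<And>s. (G has_real_derivative G' s) (at s)"
    and d2: "(G' has_real_derivative D) (at 0)"
    and mx: "\<And>s. G s \<le> G 0"
  shows "D \<le> 0"
proof (rule ccontr)
  assume "\<not> D \<le> 0" hence D: "D > 0" by simp
  have g0: "G' 0 = 0"
    using DERIV_local_max[OF d1[of 0], of 1] mx by auto
  have "((\<lambda>y. (G' y - G' 0) / (y - 0)) \<longlongrightarrow> D) (at 0)"
    using d2 by (simp add: has_field_derivative_iff)
  hence "((\<lambda>y. G' y / y) \<longlongrightarrow> D) (at_right 0)"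
    using g0 by (auto intro: tendsto_mono at_le)
  hence "eventually (\<lambda>y. G' y / y > 0) (at_right 0)"
    using D by (rule order_tendstoD(1))
  then obtain b where b: "b > 0" "\<And>y. y > 0 \<Longrightarrow> y < b \<Longrightarrow> G' y / y > 0"
    by (auto simp: eventually_at_right_field)
  obtain z where z: "0 < z" "z < b/2" "G (b/2) - G 0 = (b/2 - 0) * G' z"
    using MVT2[of 0 "b/2" G G'] d1 b(1) by auto
  have "G' z / z > 0" using b z by auto
  hence "G' z > 0" using z by (simp add: zero_less_divide_iff)
  hence "b * G' z > 0" using b(1) by simp
  hence "G (b/2) > G 0" using z by simp
  thus False using mx[of "b/2"] by simp
qed

lemma poly_growth:
  fixes C b \<epsilon> :: real and d :: nat
  assumes "b > 0" "\<epsilon> > 0"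
  shows "\<exists>R. \<forall>r\<ge>R. C * (1 + r) ^ d < \<epsilon> * exp (b * r)"
proof -
  define \<beta> where "\<beta> = b / (real d + 1)"
  have \<beta>: "\<beta> > 0" using assms by (simp add: \<beta>_def)
  have e1: "eventually (\<lambda>r. 1 + r \<le> exp (\<beta>*r)) at_top"
    using \<beta> by real_asymp
  have e2: "eventually (\<lambda>r. C < \<epsilon> * (1 + r)) at_top"
    using assms by real_asymp
  have e3: "eventually (\<lambda>r::real. r \<ge> 0) at_top" by (rule eventually_ge_at_top)
  have "eventually (\<lambda>r. C * (1 + r) ^ d < \<epsilon> * exp (b * r)) at_top"
    using e1 e2 e3
  proof eventually_elim
    case (elim r)
    have p: "(1 + r) ^ d > 0" using elim by simp
    have "C * (1 + r) ^ d < \<epsilon> * (1 + r) * (1 + r) ^ d"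
      using elim(2) p by (simp add: mult_strict_right_mono)
    also have "\<dots> = \<epsilon> * (1 + r) ^ (d+1)" by (simp add: algebra_simps)
    also have "\<dots> \<le> \<epsilon> * exp (\<beta>*r) ^ (d+1)"
      using elim assms by (intro mult_left_mono power_mono) auto
    also have "exp (\<beta>*r) ^ (d+1) = exp (real (d+1) * (\<beta>*r))"
      by (rule exp_of_nat_mult[symmetric])
    also have "real (d+1) * (\<beta>*r) = b * r" by (simp add: \<beta>_def field_simps)
    finally show ?case .
  qed
  thus ?thesis by (auto simp: eventually_at_top_linorder)
qed

lemma line_deriv1:
  assumes "C2 u"
  shows "((\<lambda>s. u (x + s *\<^sub>R axis i 1)) has_real_derivative partial i u (x + s *\<^sub>R axis i 1)) (at s)"
proof -
  have "has_partial i u (x + s *\<^sub>R axis i 1)" using assms by (simp add: C2_def)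
  hence "(\<lambda>r. u (x + s *\<^sub>R axis i 1 + r *\<^sub>R axis i 1)) differentiable (at 0)"
    by (simp add: has_partial_def)
  hence "((\<lambda>r. u (x + s *\<^sub>R axis i 1 + r *\<^sub>R axis i 1)) has_real_derivative partial i u (x + s *\<^sub>R axis i 1)) (at 0)"
    by (simp add: partial_def DERIV_deriv_iff_real_differentiable)
  hence "((\<lambda>r. u (x + (r + s) *\<^sub>R axis i 1)) has_real_derivative partial i u (x + s *\<^sub>R axis i 1)) (at 0)"
    by (simp add: scaleR_add_left algebra_simps)
  thus ?thesis using DERIV_shift[of "\<lambda>s. u (x + s *\<^sub>R axis i 1)" _ 0 s] by simp
qed

lemma line_deriv2:
  assumes "C2 u"
  shows "((\<lambda>s. partial i u (x + s *\<^sub>R axis i 1)) has_real_derivative partial i (partial i u) x) (at 0)"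
proof -
  have "has_partial i (partial i u) x" using assms by (simp add: C2_def)
  thus ?thesis
    by (simp add: has_partial_def partial_def[of i "partial i u"] DERIV_deriv_iff_real_differentiable)
qed

lemma cosh_sum_line:
  fixes x :: "real^'n"
  shows "(\<Sum>j\<in>UNIV. cosh (a * (x + s *\<^sub>R axis i 1) $ j)) =
     cosh (a * (x $ i + s)) + (\<Sum>j\<in>UNIV-{i}. cosh (a * x $ j))"
proof -
  have "(\<Sum>j\<in>UNIV. cosh (a * (x + s *\<^sub>R axis i 1) $ j)) =
     cosh (a * (x + s *\<^sub>R axis i 1) $ i) + (\<Sum>j\<in>UNIV-{i}. cosh (a * (x + s *\<^sub>R axis i 1) $ j))"
    by (subst sum.remove[of UNIV i]) auto
  also have "(\<Sum>j\<in>UNIV-{i}. cosh (a * (x + s *\<^sub>R axis i 1) $ j)) = (\<Sum>j\<in>UNIV-{i}. cosh (a * x $ j))"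
    by (rule sum.cong) (auto simp: axis_def)
  finally show ?thesis by (simp add: axis_def)
qed


lemma max_principle:
  fixes u :: "real^'n \<Rightarrow> real"
  assumes C: "C2 u" and lap: "\<And>x. laplacian u x = c * u x" and c: "c > 0" and e: "\<epsilon> > 0"
    and R: "\<And>x. norm x \<ge> R \<Longrightarrow> \<sigma> * u x - \<epsilon> * (\<Sum>j\<in>UNIV. cosh (sqrt c * x $ j)) < 0"
  shows "\<sigma> * u y - \<epsilon> * (\<Sum>j\<in>UNIV. cosh (sqrt c * y $ j)) \<le> 0"
proof (rule ccontr)
  define a where "a = sqrt c"
  have aa: "a * a = c" using c by (simp add: a_def)
  define v where "v = (\<lambda>x::real^'n. \<sigma> * u x - \<epsilon> * (\<Sum>j\<in>UNIV. cosh (a * x $ j)))"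
  assume "\<not> ?thesis"
  hence vy: "v y > 0" by (simp add: v_def a_def)
  have cu: "continuous_on UNIV u" using C by (simp add: C2_def)
  have cv: "continuous_on UNIV v" unfolding v_def
    by (intro continuous_intros cu)
  have yR: "norm y < R" using R[of y] vy by (force simp: v_def a_def)
  obtain x0 where x0: "x0 \<in> cball 0 R" "\<And>z. z \<in> cball 0 R \<Longrightarrow> v z \<le> v x0"
    using continuous_attains_sup[of "cball 0 R" v] cv yR
    by (metis compact_cball continuous_on_subset empty_iff mem_cball_0 order.strict_implies_order top_greatest)
  have vx0: "v x0 > 0" using x0(2)[of y] yR vy by simp
  have glob: "v z \<le> v x0" for z
  proof (cases "norm z \<le> R")
    case True thus ?thesis using x0 by simp
  next
    case False
    hence "v z < 0" using R[of z] by (simp add: v_def a_def)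
    thus ?thesis using vx0 by simp
  qed
  have Di: "\<sigma> * partial i (partial i u) x0 - \<epsilon> * (a * (a * cosh (a * x0 $ i))) \<le> 0" for i
  proof (rule max_second_deriv)
    define K where "K = (\<Sum>j\<in>UNIV-{i}. cosh (a * x0 $ j))"
    let ?G = "\<lambda>s. \<sigma> * u (x0 + s *\<^sub>R axis i 1) - \<epsilon> * (cosh (a * (x0 $ i + s)) + K)"
    let ?G' = "\<lambda>s. \<sigma> * partial i u (x0 + s *\<^sub>R axis i 1) - \<epsilon> * (a * sinh (a * (x0 $ i + s)))"
    have Gv: "?G s = v (x0 + s *\<^sub>R axis i 1)" for s
      unfolding v_def K_def cosh_sum_line[of a x0 s i] by simp
    show "(?G has_real_derivative ?G' s) (at s)" for s
      by (rule derivative_eq_intros line_deriv1[OF C] refl | simp)+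
    show "(?G' has_real_derivative (\<sigma> * partial i (partial i u) x0 - \<epsilon> * (a * (a * cosh (a * x0 $ i))))) (at 0)"
      by (rule derivative_eq_intros line_deriv2[OF C] refl | simp)+
    show "?G s \<le> ?G 0" for s using glob Gv[of s] Gv[of 0] by simp
  qed
  have "(\<Sum>i\<in>UNIV. \<sigma> * partial i (partial i u) x0 - \<epsilon> * (a * (a * cosh (a * x0 $ i)))) \<le> 0"
    using Di by (simp add: sum_nonpos)
  also have "(\<Sum>i\<in>UNIV. \<sigma> * partial i (partial i u) x0 - \<epsilon> * (a * (a * cosh (a * x0 $ i))))
     = \<sigma> * laplacian u x0 - \<epsilon> * c * (\<Sum>i\<in>UNIV. cosh (a * x0 $ i))"
    by (simp add: laplacian_def sum_subtractf sum_distrib_left aa mult.assoc[symmetric])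
  also have "\<dots> = c * v x0" by (simp add: lap v_def algebra_simps)
  finally show False using c vx0 by (simp add: mult_le_0_iff)
qed


lemma liouville:
  fixes u :: "real^'n \<Rightarrow> real"
  assumes C: "C2 u" and lap: "\<And>x. laplacian u x = c * u x" and c: "c > 0"
    and bd: "\<And>x. \<bar>u x\<bar> \<le> B * (1 + norm x) ^ d"
  shows "u y = 0"
proof -
  define \<phi> where "\<phi> = (\<lambda>x::real^'n. \<Sum>j\<in>UNIV. cosh (sqrt c * x $ j))"
  define N where "N = real CARD('n)"
  have N: "N \<ge> 1" by (simp add: N_def)
  define b where "b = sqrt c / N"
  have b: "b > 0" using c N by (simp add: b_def)
  have phipos: "\<phi> x > 0" for x
    unfolding \<phi>_def by (intro sum_pos) (auto simp: cosh_real_pos)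
  have key: "\<sigma> * u y - \<epsilon> * \<phi> y \<le> 0" if s: "\<bar>\<sigma>\<bar> = 1" and e: "\<epsilon> > 0" for \<sigma> \<epsilon>
  proof -
    obtain R0 where R0: "\<And>r. r \<ge> R0 \<Longrightarrow> B * (1 + r) ^ d < (\<epsilon>/2) * exp (b * r)"
      using poly_growth[OF b, of "\<epsilon>/2" B d] e by auto
    have "\<sigma> * u x - \<epsilon> * \<phi> x < 0" if x: "norm x \<ge> R0" for x
    proof -
      define m where "m = Max (range (\<lambda>i. \<bar>x $ i\<bar>))"
      have "m \<in> range (\<lambda>i. \<bar>x $ i\<bar>)" unfolding m_def by (intro Max_in) auto
      then obtain j where j: "m = \<bar>x $ j\<bar>" by auto
      have mi: "\<bar>x $ i\<bar> \<le> \<bar>x $ j\<bar>" for i unfolding j[symmetric] m_def by (intro Max_ge) auto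
      have "norm x \<le> (\<Sum>i\<in>UNIV. \<bar>x $ i\<bar>)" by (rule norm_le_l1_cart)
      also have "\<dots> \<le> N * \<bar>x $ j\<bar>"
        using sum_bounded_above[of UNIV "\<lambda>i. \<bar>x $ i\<bar>" "\<bar>x $ j\<bar>"] mi by (simp add: N_def)
      finally have "b * norm x \<le> sqrt c * \<bar>x $ j\<bar>"
        using N c by (simp add: b_def field_simps)
      hence "exp (b * norm x) \<le> exp (sqrt c * \<bar>x $ j\<bar>)" by simp
      also have "\<dots> \<le> 2 * cosh (sqrt c * x $ j)"
        by (cases "x $ j \<ge> 0") (auto simp: cosh_def abs_real_def)
      also have "cosh (sqrt c * x $ j) \<le> \<phi> x"
        unfolding \<phi>_def by (rule member_le_sum) (auto simp: cosh_real_pos less_imp_le)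
      finally have ex: "exp (b * norm x) \<le> 2 * \<phi> x" by simp
      have "\<sigma> * u x \<le> \<bar>u x\<bar>" using s by (auto simp: abs_mult abs_le_iff intro: abs_ge_self order_trans[OF abs_ge_self])
      also have "\<dots> \<le> B * (1 + norm x) ^ d" by (rule bd)
      also have "\<dots> < (\<epsilon>/2) * exp (b * norm x)" using R0 x by simp
      also have "\<dots> \<le> (\<epsilon>/2) * (2 * \<phi> x)" using ex e by (intro mult_left_mono) auto
      finally show ?thesis by simp
    qed
    thus ?thesis using max_principle[OF C lap c e, of R0 \<sigma> y] by (simp add: \<phi>_def)
  qed
  show ?thesis
  proof (rule ccontr)
    assume ne: "u y \<noteq> 0"
    define \<epsilon> where "\<epsilon> = \<bar>u y\<bar> / (2 * \<phi> y)"
    have e: "\<epsilon> > 0" using ne phipos[of y] by (simp add: \<epsilon>_def)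
    have "\<bar>u y\<bar> \<le> \<epsilon> * \<phi> y"
      using key[of 1 \<epsilon>] key[of "-1" \<epsilon>] e by auto
    also have "\<dots> = \<bar>u y\<bar> / 2" using phipos[of y] by (simp add: \<epsilon>_def)
    finally show False using ne by simp
  qed
qed


lemma exp_int: 
  assumes "(p::real) > 0"
  shows "set_integrable lborel {0<..} (\<lambda>t::real. exp (-p*t))"
proof -
  have "(\<lambda>t. exp (-p*t)) absolutely_integrable_on {0::real..}"
    by (rule nonnegative_absolutely_integrable_1[OF integrable_on_exp_minus_to_infinity[OF assms]]) auto
  hence "integrable lebesgue (\<lambda>t. indicator {0::real..} t *\<^sub>R exp (-p*t))"
    by (simp add: set_integrable_def)
  hence "integrable lborel (\<lambda>t. indicator {0::real..} t *\<^sub>R exp (-p*t))"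
    by (subst (asm) integrable_completion) auto
  hence "set_integrable lborel {0::real..} (\<lambda>t. exp (-p*t))"
    by (simp add: set_integrable_def)
  thus ?thesis by (rule set_integrable_subset) auto
qed

lemma F_int:
  fixes F :: "real \<Rightarrow> real"
  assumes cF: "continuous_on {0..} F" and bd: "\<And>t. t \<ge> 0 \<Longrightarrow> \<bar>F t\<bar> \<le> M" and p: "p > 0"
  shows "set_integrable lborel {0<..} (\<lambda>t. exp (-p*t) * F t)"
proof (rule set_integrable_bound)
  show "set_integrable lborel {0<..} (\<lambda>t. exp (-p*t) * M)"
    using exp_int[OF p] by simp
  have "continuous_on {0<..} (\<lambda>t. exp (-p*t) * F t)"
    by (intro continuous_intros continuous_on_subset[OF cF]) auto
  hence "set_borel_measurable borel {0<..} (\<lambda>t. exp (-p*t) * F t)"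
    by (intro set_measurable_continuous_on) auto
  thus "set_borel_measurable lborel {0<..} (\<lambda>t. exp (-p*t) * F t)"
    by (simp add: set_borel_measurable_def)
  have M: "M \<ge> 0" using bd[of 0] by simp
  show "AE x in lborel. x \<in> {0<..} \<longrightarrow> norm (exp (-p*x) * F x) \<le> norm (exp (-p*x) * M)"
    using bd M by (auto simp: abs_mult intro!: mult_left_mono)
qed

lemma laplace_bound:
  fixes F :: "real \<Rightarrow> real"
  assumes cF: "continuous_on {0..} F" and bd: "\<And>t. t \<ge> 0 \<Longrightarrow> \<bar>F t\<bar> \<le> M" and p: "p > 0"
  shows "\<bar>laplace F p\<bar> \<le> M * (LINT t:{0<..}|lborel. exp (-p*t))"
proof -
  have i1: "set_integrable lborel {0<..} (\<lambda>t. exp (-p*t) * F t)" by (rule F_int[OF cF bd p])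
  have i2: "set_integrable lborel {0<..} (\<lambda>t. exp (-p*t) * M)" using exp_int[OF p] by simp
  have i3: "set_integrable lborel {0<..} (\<lambda>t. exp (-p*t) * (-M))" by (rule set_integrable_mult_left[OF exp_int[OF p]])
  have "laplace F p \<le> (LINT t:{0<..}|lborel. exp (-p*t) * M)"
    unfolding laplace_def using bd
    by (intro set_integral_mono[OF i1 i2]) (auto intro!: mult_left_mono simp: abs_le_iff)
  moreover have "(LINT t:{0<..}|lborel. exp (-p*t) * (-M)) \<le> laplace F p"
    unfolding laplace_def
  proof (intro set_integral_mono[OF i3 i1])
    fix t :: real assume "t \<in> {0<..}"
    hence "-M \<le> F t" using bd[of t] by auto
    thus "exp (-p*t) * (-M) \<le> exp (-p*t) * F t" by (intro mult_left_mono) auto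
  qed
  moreover have "(LINT t:{0<..}|lborel. exp (-p*t) * (-M)) = - M * (LINT t:{0<..}|lborel. exp (-p*t))"
    by (subst set_integral_mult_left) simp
  moreover have "(LINT t:{0<..}|lborel. exp (-p*t) * M) = M * (LINT t:{0<..}|lborel. exp (-p*t))"
    by simp
  ultimately show ?thesis by (simp add: abs_le_iff mult.commute)
qed


lemma kernel_pos:
  assumes K: "assumption_kernel k" and p: "p > 0"
  shows "laplace k p > 0"
proof -
  define g where "g = (\<lambda>t::real. indicator {0<..} t *\<^sub>R (exp (-p*t) * k t))"
  have int: "integrable lborel g"
    using K p by (simp add: assumption_kernel_def set_integrable_def g_def)
  have nn: "g t \<ge> 0" for t
    using K by (auto simp: g_def assumption_kernel_def indicator_def)
  have lg: "laplace k p = integral\<^sup>L lborel g"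
    by (simp add: laplace_def set_lebesgue_integral_def g_def)
  have "laplace k p \<ge> 0" unfolding lg using nn by (simp add: Bochner_Integration.integral_nonneg)
  moreover have "laplace k p \<noteq> 0"
  proof
    assume "laplace k p = 0"
    hence ae: "AE t in lborel. g t = 0"
      using integral_nonneg_eq_0_iff_AE[OF int] nn lg by auto
    have meas: "g \<in> borel_measurable lborel" using int by auto
    have seteq: "{t \<in> space lborel. \<not> g t = 0} = {t\<in>{0<..}. k t \<noteq> 0}"
      by (auto simp: g_def indicator_def)
    have "{t \<in> space lborel. \<not> g t = 0} \<in> sets lborel" using meas by measurable
    hence "emeasure lborel {t\<in>{0<..}. k t \<noteq> 0} = 0"
      using AE_iff_measurable[OF _ seteq] ae seteq by auto
    thus False using K by (simp add: assumption_kernel_def)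
  qed
  ultimately show ?thesis by simp
qed

lemma poly_bound:
  fixes P :: "real poly" assumes r: "r \<ge> 0"
  shows "\<bar>poly P r\<bar> \<le> (\<Sum>i\<le>degree P. \<bar>coeff P i\<bar>) * (1 + r) ^ degree P"
proof -
  have "\<bar>poly P r\<bar> = \<bar>\<Sum>i\<le>degree P. coeff P i * r ^ i\<bar>" by (simp add: poly_altdef)
  also have "\<dots> \<le> (\<Sum>i\<le>degree P. \<bar>coeff P i * r ^ i\<bar>)" by (rule sum_abs)
  also have "\<dots> \<le> (\<Sum>i\<le>degree P. \<bar>coeff P i\<bar> * (1 + r) ^ degree P)"
  proof (rule sum_mono)
    fix i assume "i \<in> {..degree P}"
    hence "r ^ i \<le> (1 + r) ^ i" using r by (intro power_mono) auto
    also have "\<dots> \<le> (1 + r) ^ degree P" using r \<open>i \<in> {..degree P}\<close> by (intro power_increasing) auto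
    finally have "r ^ i \<le> (1 + r) ^ degree P" .
    thus "\<bar>coeff P i * r ^ i\<bar> \<le> \<bar>coeff P i\<bar> * (1 + r) ^ degree P"
      using r by (simp add: abs_mult mult_left_mono)
  qed
  also have "\<dots> = (\<Sum>i\<le>degree P. \<bar>coeff P i\<bar>) * (1 + r) ^ degree P" by (simp add: sum_distrib_right)
  finally show ?thesis .
qed


lemma lerch:
  fixes F :: "real \<Rightarrow> real"
  assumes cF: "continuous_on {0..} F" and bd: "\<And>t. t \<ge> 0 \<Longrightarrow> \<bar>F t\<bar> \<le> M"
    and lz: "\<And>p. p > 0 \<Longrightarrow> laplace F p = 0" and t0: "t0 > 0"
  shows "F t0 = 0"
proof -
  have M: "M \<ge> 0" using bd[of 0] by simp
  define Fe where "Fe = (\<lambda>t. F (max t 0))"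
  have cFe: "continuous_on UNIV Fe" unfolding Fe_def
    by (rule continuous_on_compose2[OF cF]) (auto intro!: continuous_intros)
  have bFe: "\<bar>Fe s\<bar> \<le> M" for s unfolding Fe_def by (rule bd) simp
  define G where "G = (\<lambda>y::real. if y \<le> 0 then 0 else y * Fe (- ln y))"
  have Gb: "\<bar>G y\<bar> \<le> M * \<bar>y\<bar>" for y
    using bFe[of "- ln y"] M by (auto simp: G_def abs_mult mult.commute mult_nonneg_nonpos intro: mult_left_mono)
  have cG: "continuous_on {0..1} G"
  proof (subst continuous_on_eq_continuous_within, intro ballI)
    fix y :: real assume y: "y \<in> {0..1}"
    show "continuous (at y within {0..1}) G"
    proof (cases "y = 0")
      case True
      have "(G \<longlongrightarrow> 0) (at 0 within {0..1})"
      proof (rule Lim_null_comparison)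
        show "\<forall>\<^sub>F z in at 0 within {0..1}. norm (G z) \<le> M * \<bar>z\<bar>" using Gb by simp
        show "((\<lambda>z. M * \<bar>z\<bar>) \<longlongrightarrow> 0) (at 0 within {0..1})"
          by (rule tendsto_eq_intros | simp)+
      qed
      thus ?thesis using True by (simp add: continuous_within G_def)
    next
      case False
      hence yp: "y > 0" using y by simp
      define H where "H = (\<lambda>y. y * Fe (- ln y))"
      have "continuous_on {0<..} H" unfolding H_def
        by (intro continuous_intros continuous_on_compose2[OF cFe]) auto
      hence "isCont H y" using yp by (simp add: continuous_on_eq_continuous_at)
      moreover have "eventually (\<lambda>z. G z = H z) (nhds y)"
      proof -
        have "eventually (\<lambda>z. z \<in> {0<..}) (nhds y)" using yp by (intro eventually_nhds_in_open) auto
        thus ?thesis by eventually_elim (auto simp: G_def H_def)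
      qed
      ultimately have "isCont G y" using isCont_cong by blast
      thus ?thesis by (rule continuous_at_imp_continuous_within)
    qed
  qed
  have Gexp: "G (exp (-t)) = exp (-t) * F t" if "t \<ge> 0" for t
    using that by (simp add: G_def Fe_def)
  define A1 where "A1 = (LINT t:{0<..}|lborel. exp (- 1 * (t::real)))"
  define H1 where "H1 = (\<lambda>t. F t * (exp (-t) * F t))"
  have cH1: "continuous_on {0..} H1" unfolding H1_def by (intro continuous_intros cF)
  have bH1: "\<bar>H1 t\<bar> \<le> M * M" if "t \<ge> 0" for t
  proof -
    have "\<bar>H1 t\<bar> = \<bar>F t\<bar> * (exp (-t) * \<bar>F t\<bar>)" by (simp add: H1_def abs_mult)
    also have "\<dots> \<le> M * (1 * M)"
      using bd[OF that] that M by (intro mult_mono) auto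
    finally show ?thesis by simp
  qed
  define J where "J = laplace H1 1"
  have Jb: "\<bar>J\<bar> \<le> \<delta> * M * A1" if dp: "\<delta> > 0" for \<delta>
  proof -
    obtain q where pq: "polynomial_function q" and q: "\<And>y. y \<in> {0..1} \<Longrightarrow> norm (G y - q y) < \<delta>"
      using Stone_Weierstrass_polynomial_function[OF compact_Icc cG dp] by blast
    obtain a n where qa: "q = (\<lambda>y. \<Sum>i\<le>n. a i * y ^ i)"
      using pq by (auto simp: real_polynomial_function_eq[symmetric] real_polynomial_function_iff_sum)
    define Hq where "Hq = (\<lambda>t. F t * q (exp (-t)))"
    have cq: "continuous_on UNIV q" unfolding qa by (intro continuous_intros)
    have cHq: "continuous_on {0..} Hq" unfolding Hq_def
      by (intro continuous_intros cF continuous_on_compose2[OF cq]) auto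
    have e01: "exp (-t) \<in> {0..1}" if "t \<ge> 0" for t :: real using that by auto
    have qG: "\<bar>exp (-t) * F t - q (exp (-t))\<bar> < \<delta>" if "t \<ge> 0" for t
      using q[OF e01[OF that]] Gexp[OF that] by simp
    have bHq: "\<bar>Hq t\<bar> \<le> M * (M + \<delta>)" if t: "t \<ge> 0" for t
    proof -
      have "\<bar>q (exp (-t))\<bar> \<le> \<bar>exp (-t) * F t\<bar> + \<delta>" using qG[OF t] by linarith
      also have "\<bar>exp (-t) * F t\<bar> \<le> 1 * M"
        using mult_mono[of "exp(-t)" 1 "\<bar>F t\<bar>" M] bd[OF t] t by (simp add: abs_mult)
      finally have "\<bar>q (exp (-t))\<bar> \<le> M + \<delta>" by simp
      thus ?thesis using bd[OF t] by (simp add: Hq_def abs_mult) (intro mult_mono, auto)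
    qed
    define Hd where "Hd = (\<lambda>t. F t * (exp (-t) * F t - q (exp (-t))))"
    have cHd: "continuous_on {0..} Hd" unfolding Hd_def
      by (intro continuous_intros cF continuous_on_compose2[OF cq]) auto
    have bHd: "\<bar>Hd t\<bar> \<le> M * \<delta>" if t: "t \<ge> 0" for t
      unfolding Hd_def abs_mult using bd[OF t] qG[OF t] by (intro mult_mono) auto
    have Lq: "laplace Hq 1 = 0"
    proof -
      have int: "integrable lborel (\<lambda>t. indicator {0<..} t *\<^sub>R (exp (- (real i + 1) * t) * F t))" for i
        using F_int[OF cF bd, of "real i + 1"] by (simp add: set_integrable_def)
      have eq: "indicator {0<..} t *\<^sub>R (exp (- 1 * t) * Hq t) =
          (\<Sum>i\<le>n. a i * (indicator {0<..} t *\<^sub>R (exp (- (real i + 1) * t) * F t)))" for t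
      proof -
        have "exp (- (real i + 1) * t) = exp (-t) * exp (-t) ^ i" for i
          by (simp add: exp_of_nat_mult[symmetric] exp_add[symmetric] algebra_simps)
        thus ?thesis by (simp add: Hq_def qa sum_distrib_left sum_distrib_right algebra_simps)
      qed
      have "laplace Hq 1 = (\<Sum>i\<le>n. a i * laplace F (real i + 1))"
        unfolding laplace_def set_lebesgue_integral_def eq
        using int by (simp add: integral_sum)
      also have "\<dots> = 0" using lz by simp
      finally show ?thesis .
    qed
    have "laplace Hd 1 = laplace H1 1 - laplace Hq 1"
    proof -
      have "laplace Hd 1 = (LINT t:{0<..}|lborel. exp (- 1 * t) * H1 t - exp (- 1 * t) * Hq t)"
        unfolding laplace_def by (simp add: Hd_def H1_def Hq_def algebra_simps)
      also have "\<dots> = laplace H1 1 - laplace Hq 1"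
        unfolding laplace_def
        by (rule set_integral_diff(2)[OF F_int[OF cH1 bH1] F_int[OF cHq bHq]]) simp_all
      finally show ?thesis .
    qed
    hence "J = laplace Hd 1" using Lq by (simp add: J_def)
    also have "\<bar>laplace Hd 1\<bar> \<le> M * \<delta> * A1"
      using laplace_bound[OF cHd bHd, of 1] unfolding A1_def by simp
    finally show ?thesis by (simp add: mult_ac)
  qed
  have A1: "A1 \<ge> 0" unfolding A1_def set_lebesgue_integral_def
    by (rule Bochner_Integration.integral_nonneg) (auto simp: indicator_def)
  have J0: "J = 0"
  proof (rule ccontr)
    assume "J \<noteq> 0"
    define \<delta> where "\<delta> = \<bar>J\<bar> / (2 * (M * A1 + 1))"
    have "M * A1 \<ge> 0" using M A1 by simp
    hence dp: "\<delta> > 0" using \<open>J \<noteq> 0\<close> by (simp add: \<delta>_def)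
    have "\<delta> * M * A1 = \<bar>J\<bar> * (M * A1) / (2 * (M * A1 + 1))" by (simp add: \<delta>_def)
    also have "\<dots> < \<bar>J\<bar>"
    proof -
      have pos: "2 * (M * A1 + 1) > 0" using \<open>M * A1 \<ge> 0\<close> by (simp add: add_nonneg_pos)
      have lt0: "\<And>X::real. X \<ge> 0 \<Longrightarrow> X < 2 * (X + 1)" by (simp add: algebra_simps)
      have "\<bar>J\<bar> * (M * A1) < \<bar>J\<bar> * (2 * (M * A1 + 1))"
        using lt0[OF \<open>M * A1 \<ge> 0\<close>] \<open>J \<noteq> 0\<close> by (intro mult_strict_left_mono) auto
      thus ?thesis using pos by (simp add: pos_divide_less_eq mult.commute)
    qed
    finally show False using Jb[OF dp] by simp
  qed
  define h where "h = (\<lambda>t. exp (- 1 * t) * H1 t)"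
  have si: "set_integrable lborel {0<..} h" using F_int[OF cH1 bH1, of 1] unfolding h_def by simp
  have i0: "integral {0<..} h = 0"
    using set_borel_integral_eq_integral(2)[OF si] J0 by (simp add: J_def laplace_def h_def)
  have hnn: "h t \<ge> 0" for t
  proof -
    have "h t = (exp (-t) * exp (-t)) * (F t * F t)" by (simp add: h_def H1_def mult_ac)
    thus ?thesis by simp
  qed
  have ch: "continuous_on {t0/2..t0+1} h" unfolding h_def
    by (rule continuous_on_subset[of "{0..}"]) (use t0 in \<open>auto intro!: continuous_intros cH1\<close>)
  have ih: "h integrable_on {t0/2..t0+1}" by (rule integrable_continuous_real[OF ch])
  have "integral {t0/2..t0+1} h \<le> integral {0<..} h"
    using t0 by (intro integral_subset_le ih set_borel_integral_eq_integral(1)[OF si]) (auto simp: hnn)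
  moreover have "integral {t0/2..t0+1} h \<ge> 0" by (rule integral_nonneg[OF ih]) (simp add: hnn)
  ultimately have "(h has_integral 0) (cbox (t0/2) (t0+1))"
    using i0 ih by (metis antisym cbox_interval has_integral_integral)
  hence "h t0 = 0"
    using t0 by (intro has_integral_0_cbox_imp_0[OF _ _ _ _, of "t0/2" "t0+1" h]) (auto simp: hnn ch)
  thus ?thesis by (simp add: h_def H1_def)
qed


lemma exp_int_nonneg: "(LINT t:{0<..}|lborel. exp (- p * (t::real))) \<ge> 0"
  unfolding set_lebesgue_integral_def
  by (rule Bochner_Integration.integral_nonneg) (auto simp: indicator_def)

theorem theorem4:
  fixes k :: "real \<Rightarrow> real" and w :: "real \<Rightarrow> real^'n \<Rightarrow> real"
  assumes "assumption_kernel k"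
    and "poly_bounded_LT_solution k (\<lambda>x. 0) w"
  shows "\<forall>t\<ge>0. \<forall>x. w t x = 0"
proof -
  note D = assms(2)[unfolded poly_bounded_LT_solution_def]
  obtain P :: "real poly" where P0: "\<forall>t\<ge>0. \<forall>x. \<bar>w t x\<bar> \<le> poly P (norm x)"
    using D[THEN conjunct1] by (elim exE)
  have P: "\<And>t x. t \<ge> 0 \<Longrightarrow> \<bar>w t x\<bar> \<le> poly P (norm x)" using P0 by simp
  have uc: "\<forall>t0\<ge>0. \<forall>e>0. \<exists>d>0. \<forall>t\<ge>0. \<bar>t - t0\<bar> < d \<longrightarrow> (\<forall>x. \<bar>w t x - w t0 x\<bar> < e)"
    using D[THEN conjunct2, THEN conjunct1] .
  have w0a: "\<forall>x. w 0 x = 0" using D[THEN conjunct2, THEN conjunct2, THEN conjunct1] .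
  hence w0: "\<And>x. w 0 x = 0" by simp
  have eqa: "\<forall>p>0. C2 (\<lambda>x. laplace (\<lambda>t. w t x) p) \<and>
        (\<forall>x. p * laplace k p * laplace (\<lambda>t. w t x) p - laplace k p * 0
             = laplacian (\<lambda>y. laplace (\<lambda>t. w t y) p) x)"
    using D[THEN conjunct2, THEN conjunct2, THEN conjunct2] .
  have eq: "C2 (\<lambda>x. laplace (\<lambda>t. w t x) p) \<and>
        (\<forall>x. p * laplace k p * laplace (\<lambda>t. w t x) p - laplace k p * 0
             = laplacian (\<lambda>y. laplace (\<lambda>t. w t y) p) x)" if "p > 0" for p
    using eqa that by blast
  have cont: "continuous_on {0..} (\<lambda>t. w t x)" for x
    unfolding continuous_on_iff
  proof (intro ballI allI impI)
    fix t0 :: real and e :: real assume "t0 \<in> {0..}" "e > 0"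
    then obtain d where "d > 0" "\<And>t. t \<ge> 0 \<Longrightarrow> \<bar>t - t0\<bar> < d \<Longrightarrow> \<bar>w t x - w t0 x\<bar> < e"
      using uc by force
    thus "\<exists>d>0. \<forall>t\<in>{0..}. dist t t0 < d \<longrightarrow> dist (w t x) (w t0 x) < e"
      by (auto simp: dist_real_def)
  qed
  have L0: "laplace (\<lambda>t. w t x) p = 0" if p: "p > 0" for p x
  proof -
    define U where "U = (\<lambda>x. laplace (\<lambda>t. w t x) p)"
    define c where "c = p * laplace k p"
    have c: "c > 0" using kernel_pos[OF assms(1) p] p by (simp add: c_def)
    have CU: "C2 U" using eq[OF p] by (simp add: U_def)
    have lapU: "laplacian U y = c * U y" for y using eq[OF p] by (simp add: U_def c_def)
    define A where "A = (LINT t:{0<..}|lborel. exp (- p * (t::real)))"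
    have A: "A \<ge> 0" unfolding A_def by (rule exp_int_nonneg)
    define S where "S = (\<Sum>i\<le>degree P. \<bar>coeff P i\<bar>)"
    have bU: "\<bar>U y\<bar> \<le> (A * S) * (1 + norm y) ^ degree P" for y
    proof -
      have "\<bar>U y\<bar> \<le> poly P (norm y) * A"
        unfolding U_def A_def by (rule laplace_bound[OF cont P p])
      also have "\<dots> \<le> (S * (1 + norm y) ^ degree P) * A"
        using poly_bound[of "norm y" P] A by (intro mult_right_mono) (auto simp: S_def)
      finally show ?thesis by (simp add: mult_ac)
    qed
    have "U x = 0" by (rule liouville[OF CU lapU c bU])
    thus ?thesis by (simp add: U_def)
  qed
  show ?thesis
  proof (intro allI impI)
    fix t :: real and x assume t: "t \<ge> 0"
    show "w t x = 0"
    proof (cases "t = 0")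
      case True thus ?thesis using w0 by simp
    next
      case False
      hence "t > 0" using t by simp
      thus ?thesis using lerch[OF cont P L0] by blast
    qed
  qed
qed

end
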